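(* Let $\Gamma$ be a graph whose switching class is a non-trivial regular two-graph. Then $\Gamma$ is not bipartite.
   Context: Graphs are finite, simple and undirected. For a graph $\Gamma$ with adjacency matrix $A$ on $v$ vertices, the Seidel matrix is $S(\Gamma)=J-I-2A$. For a partition $\Pi=\{U,W\}$ of the vertex set (one part possibly empty), Seidel switching gives the graph $\Gamma^\Pi$ on the same vertices in which two distinct vertices are adjacent iff either they are adjacent in $\Gamma$ and lie in the same part, or they are non-adjacent in $\Gamma$ and lie in different parts. The switching class $[\Gamma]$ is the set of all such $\Gamma^\Pi$. It is a regular two-graph if $S(\Gamma)$ has exactly two distinct eigenvalues; it is trivial if it contains a complete graph or an edgeless graph, and non-trivial otherwise. *)

theory Defs
  imports "HOL-Analysis.Analysis"
begin

definition simple_graph :: "('n::finite \<Rightarrow> 'n \<Rightarrow> bool) \<Rightarrow> bool" where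
  "simple_graph E \<longleftrightarrow> (\<forall>x y. E x y \<longrightarrow> E y x) \<and> (\<forall>x. \<not> E x x)"

definition adjacency_matrix :: "('n::finite \<Rightarrow> 'n \<Rightarrow> bool) \<Rightarrow> real^'n^'n" where
  "adjacency_matrix E = (\<chi> i j. if E i j then 1 else 0)"

definition all_ones :: "real^'n^'n" where
  "all_ones = (\<chi> i j. 1)"

definition seidel_matrix :: "('n::finite \<Rightarrow> 'n \<Rightarrow> bool) \<Rightarrow> real^'n^'n" where
  "seidel_matrix E = all_ones - mat 1 - 2 *\<^sub>R adjacency_matrix E"

definition is_eigenvalue :: "real^'n^'n \<Rightarrow> real \<Rightarrow> bool" where
  "is_eigenvalue M c \<longleftrightarrow> (\<exists>x. x \<noteq> 0 \<and> M *v x = c *\<^sub>R x)"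

definition switch :: "('n \<Rightarrow> 'n \<Rightarrow> bool) \<Rightarrow> 'n set \<Rightarrow> 'n \<Rightarrow> 'n \<Rightarrow> bool" where
  "switch E U x y \<longleftrightarrow> x \<noteq> y \<and>
     ((E x y \<and> (x \<in> U \<longleftrightarrow> y \<in> U)) \<or> (\<not> E x y \<and> \<not> (x \<in> U \<longleftrightarrow> y \<in> U)))"

definition switching_class :: "('n \<Rightarrow> 'n \<Rightarrow> bool) \<Rightarrow> ('n \<Rightarrow> 'n \<Rightarrow> bool) set" where
  "switching_class E = {switch E U | U. True}"

text \<open>The switching class of E is a regular two-graph iff S(E) has exactly two distinct eigenvalues.\<close>
definition regular_two_graph :: "('n::finite \<Rightarrow> 'n \<Rightarrow> bool) \<Rightarrow> bool" where
  "regular_two_graph E \<longleftrightarrow> card {c. is_eigenvalue (seidel_matrix E) c} = 2"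

definition complete_graph :: "('n \<Rightarrow> 'n \<Rightarrow> bool) \<Rightarrow> bool" where
  "complete_graph E \<longleftrightarrow> (\<forall>x y. x \<noteq> y \<longrightarrow> E x y)"

definition edgeless_graph :: "('n \<Rightarrow> 'n \<Rightarrow> bool) \<Rightarrow> bool" where
  "edgeless_graph E \<longleftrightarrow> (\<forall>x y. \<not> E x y)"

definition trivial_switching_class :: "('n \<Rightarrow> 'n \<Rightarrow> bool) \<Rightarrow> bool" where
  "trivial_switching_class E \<longleftrightarrow>
     (\<exists>G \<in> switching_class E. complete_graph G \<or> edgeless_graph G)"

definition bipartite :: "('n \<Rightarrow> 'n \<Rightarrow> bool) \<Rightarrow> bool" where
  "bipartite E \<longleftrightarrow> (\<exists>U. \<forall>x y. E x y \<longrightarrow> (x \<in> U \<longleftrightarrow> y \<notin> U))"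

end

theory Submission
  imports Defs
begin


lemma sym_inner:
  fixes S :: "real^'n^'n"
  assumes "transpose S = S"
  shows "inner (S *v x) y = inner x (S *v y)"
  by (metis assms dot_lmul_matrix vector_transpose_matrix)

lemma quad_le_zero:
  fixes A B :: real
  assumes A: "A \<ge> 0" and h: "\<And>e. 2 * e * A \<le> e^2 * B"
  shows "A = 0"
proof (rule ccontr)
  assume "A \<noteq> 0" hence Ap: "A > 0" using A by auto
  define K where "K = \<bar>B\<bar> + 1"
  have Kp: "K > 0" unfolding K_def by auto
  define e where "e = A / K"
  have ep: "e > 0" using Ap Kp unfolding e_def by auto
  have "2 * e * A \<le> e^2 * B" by (rule h)
  hence "2 * A \<le> e * B" using ep by (simp add: power2_eq_square mult.assoc)
  also have "e * B \<le> e * \<bar>B\<bar>" using ep by (simp add: mult_left_mono)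
  also have "e * \<bar>B\<bar> \<le> e * K" using ep unfolding K_def by (simp add: mult_left_mono)
  also have "e * K = A" unfolding e_def using Kp by simp
  finally show False using Ap by simp
qed

lemma sym_eigvec:
  fixes S :: "real^'n^'n"
  assumes sym: "transpose S = S" and sub: "subspace R" and inv: "\<And>x. x \<in> R \<Longrightarrow> S *v x \<in> R"
    and ne: "y \<in> R" "y \<noteq> 0"
  shows "\<exists>u\<in>R. u \<noteq> 0 \<and> S *v u = (inner u (S *v u)) *\<^sub>R u"
proof -
  define g where "g x = inner x (S *v x)" for x
  define K where "K = R \<inter> sphere 0 1"
  have cK: "compact K" unfolding K_def
    using closed_subspace[OF sub] compact_sphere by (simp add: closed_Int_compact)
  have yK: "y /\<^sub>R norm y \<in> K" unfolding K_def using ne sub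
    by (simp add: subspace_scale)
  have cg: "continuous_on K g" unfolding g_def
    by (intro continuous_intros linear_continuous_on matrix_vector_mul_bounded_linear)
  obtain u where uK: "u \<in> K" and umax: "\<And>z. z \<in> K \<Longrightarrow> g z \<le> g u"
    using continuous_attains_sup[OF cK _ cg] yK by blast
  have uR: "u \<in> R" and un: "norm u = 1" using uK unfolding K_def by auto
  define l where "l = g u"
  have gle: "g x \<le> l * (norm x)^2" if xR: "x \<in> R" for x
  proof (cases "x = 0")
    case True thus ?thesis by (simp add: g_def)
  next
    case False
    hence nx: "norm x > 0" by simp
    have "x /\<^sub>R norm x \<in> K" unfolding K_def using xR sub False by (simp add: subspace_scale)
    hence "g (x /\<^sub>R norm x) \<le> l" using umax l_def by auto
    moreover have "g (x /\<^sub>R norm x) = g x / (norm x)^2"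
      unfolding g_def by (simp add: matrix_vector_mult_scaleR power2_eq_square field_simps)
    ultimately show ?thesis using nx by (simp add: divide_le_eq mult.commute)
  qed
  define w where "w = S *v u - l *\<^sub>R u"
  have wR: "w \<in> R" unfolding w_def using inv[OF uR] uR sub
    by (simp add: subspace_diff subspace_scale)
  have uu: "inner u u = 1" using un by (simp add: dot_square_norm)
  have uw: "inner u w = 0" unfolding w_def l_def g_def using uu by (simp add: inner_diff_right)
  have "inner w w = inner w (S *v u) - l * inner w u"
    by (subst (2) w_def) (simp add: inner_diff_right)
  hence wSu: "inner w (S *v u) = inner w w" using uw by (simp add: inner_commute)
  have key: "2 * e * inner w w \<le> e^2 * (l * inner w w - g w)" for e
  proof -
    have "u + e *\<^sub>R w \<in> R" using uR wR sub by (simp add: subspace_add subspace_scale)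
    hence h: "g (u + e *\<^sub>R w) \<le> l * (norm (u + e *\<^sub>R w))^2" by (rule gle)
    have n2: "(norm (u + e *\<^sub>R w))^2 = 1 + e^2 * inner w w"
      unfolding power2_norm_eq_inner by (simp add: inner_add_left inner_add_right uu uw inner_commute power2_eq_square)
    have "g (u + e *\<^sub>R w) = g u + 2 * e * inner w (S *v u) + e^2 * g w"
    proof -
      have a: "inner u (S *v w) = inner w (S *v u)"
        using sym_inner[OF sym, of u w] by (simp add: inner_commute)
      have "g (u + e *\<^sub>R w) = inner u (S *v u) + e * inner u (S *v w) + e * inner w (S *v u) + e * e * inner w (S *v w)"
        unfolding g_def by (simp add: matrix_vector_right_distrib matrix_vector_mult_scaleR inner_add_left inner_add_right algebra_simps)
      thus ?thesis unfolding g_def using a by (simp add: power2_eq_square algebra_simps)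
    qed
    with h n2 wSu show ?thesis unfolding l_def by (simp add: algebra_simps)
  qed
  have "inner w w = 0" by (rule quad_le_zero[OF inner_ge_zero key])
  hence "w = 0" by simp
  thus ?thesis using uR un unfolding w_def l_def g_def by (intro bexI[of _ u]) auto
qed



lemma two_eig_identity:
  fixes S :: "real^'n^'n"
  assumes sym: "transpose S = S" and c2: "card {c. is_eigenvalue S c} = 2"
  shows "\<exists>a b. \<forall>x. S *v (S *v x) = a *\<^sub>R (S *v x) + b *\<^sub>R x"
proof -
  obtain p q where pq: "{c. is_eigenvalue S c} = {p, q}" using c2 by (auto simp: card_2_iff)
  define P where "P x = S *v (S *v x) - (p + q) *\<^sub>R (S *v x) + (p * q) *\<^sub>R x" for x
  have Padd: "P x + P y = P (x + y)" for x y
    unfolding P_def by (simp add: matrix_vector_right_distrib algebra_simps)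
  have Pscale: "c *\<^sub>R P x = P (c *\<^sub>R x)" for c x
    unfolding P_def by (simp add: matrix_vector_mult_scaleR algebra_simps)
  have P0: "P 0 = 0" unfolding P_def by simp
  have Pcomm: "S *v P x = P (S *v x)" for x
    unfolding P_def by (simp add: matrix_vector_right_distrib matrix_vector_mult_diff_distrib matrix_vector_mult_scaleR)
  have Psym: "inner (P x) y = inner x (P y)" for x y
    unfolding P_def by (simp add: inner_add_left inner_add_right inner_diff_left inner_diff_right sym_inner[OF sym])
  have allP: "P x = 0" for x
  proof (rule ccontr)
    assume nz: "P x \<noteq> 0"
    define R where "R = range P"
    have sub: "subspace R" unfolding subspace_def R_def
    proof (intro conjI ballI allI)
      show "0 \<in> range P" using P0 by (metis rangeI)
    next
      fix a b assume "a \<in> range P" "b \<in> range P"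
      then obtain a' b' where "a = P a'" "b = P b'" by blast
      thus "a + b \<in> range P" using Padd by (metis rangeI)
    next
      fix c a assume "a \<in> range P"
      then obtain a' where "a = P a'" by blast
      thus "c *\<^sub>R a \<in> range P" using Pscale by (metis rangeI)
    qed
    have inv: "S *v z \<in> R" if "z \<in> R" for z using that unfolding R_def by (auto simp: Pcomm)
    obtain u where uR: "u \<in> R" and u0: "u \<noteq> 0" and ev: "S *v u = (inner u (S *v u)) *\<^sub>R u"
      using sym_eigvec[OF sym sub inv, of "P x"] nz unfolding R_def by blast
    define l where "l = inner u (S *v u)"
    have "is_eigenvalue S l" unfolding is_eigenvalue_def l_def using u0 ev by blast
    hence lpq: "l = p \<or> l = q" using pq by blast
    have ev': "S *v u = l *\<^sub>R u" using ev unfolding l_def .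
    have ev2: "S *v (S *v u) = (l * l) *\<^sub>R u" by (simp only: ev' matrix_vector_mult_scaleR) simp
    have "P u = ((l - p) * (l - q)) *\<^sub>R u"
      unfolding P_def ev2 by (simp add: ev' algebra_simps)
    hence Pu: "P u = 0" using lpq by auto
    obtain y where y: "u = P y" using uR unfolding R_def by blast
    have "inner u u = inner y (P u)" using Psym y by simp
    hence "inner u u = 0" using Pu by simp
    thus False using u0 by simp
  qed
  show ?thesis
    by (rule exI[of _ "p + q"], rule exI[of _ "- (p * q)"]) (use allP in \<open>simp add: P_def algebra_simps\<close>)
qed



definition bip :: "('n \<Rightarrow> 'n \<Rightarrow> bool) \<Rightarrow> 'n set \<Rightarrow> bool" where
  "bip E U \<longleftrightarrow> (\<forall>x y. E x y \<longrightarrow> (x \<in> U \<longleftrightarrow> y \<notin> U))"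

locale rtg =
  fixes E :: "'n::finite \<Rightarrow> 'n \<Rightarrow> bool" and s :: "'n \<Rightarrow> 'n \<Rightarrow> real" and a :: real
  assumes symE: "E x y \<Longrightarrow> E y x" and irr: "\<not> E x x"
  and sdef: "s i j = (if i = j then 0 else if E i j then -1 else 1)"
  and H2: "i \<noteq> j \<Longrightarrow> (\<Sum>k\<in>UNIV. s i k * s k j) = a * s i j"
begin

lemma symE_iff: "E x y = E y x" using symE by blast

lemma s_sym: "s i j = s j i" by (simp add: sdef symE_iff eq_commute)

lemma s_pm: "i \<noteq> j \<Longrightarrow> s i j = 1 \<or> s i j = -1" by (simp add: sdef)

lemma s_diag[simp]: "s i i = 0" by (simp add: sdef)

lemma triv_edgeless:
  assumes "\<And>x y. \<not> E x y" shows "trivial_switching_class E"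
  unfolding trivial_switching_class_def switching_class_def
  by (rule bexI[of _ "switch E {}"]) (auto simp: edgeless_graph_def switch_def assms)

lemma triv_neg:
  assumes aa: "a = - (real CARD('n) - 2)"
  shows "trivial_switching_class E"
proof -
  have f: "s i j * s i k * s k j = -1" if ij: "i \<noteq> j" and ki: "k \<noteq> i" and kj: "k \<noteq> j" for i j k
  proof -
    define g where "g k = s i j * (s i k * s k j)" for k
    have sq: "s i j * s i j = 1" using s_pm[OF ij] by auto
    have "(\<Sum>k\<in>UNIV. g k) = s i j * (a * s i j)" unfolding g_def
      by (simp add: sum_distrib_left[symmetric] H2[OF ij])
    hence tot: "(\<Sum>k\<in>UNIV. g k) = a" using sq by (simp add: algebra_simps)
    have "(\<Sum>k\<in>UNIV. g k) = (\<Sum>k\<in>UNIV - {i,j}. g k) + (\<Sum>k\<in>{i,j}. g k)"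
      by (rule sum.subset_diff) auto
    also have "(\<Sum>k\<in>{i,j}. g k) = 0" using ij by (simp add: g_def)
    finally have t2: "(\<Sum>k\<in>UNIV - {i,j}. g k) = a" using tot by simp
    have cd: "card (UNIV - {i,j}) = CARD('n) - 2" using ij by (simp add: card_Diff_subset)
    have c2: "CARD('n) \<ge> 2"
    proof -
      have "card {i,j} \<le> CARD('n)" by (rule card_mono) auto
      thus ?thesis using ij by simp
    qed
    have "(\<Sum>k\<in>UNIV - {i,j}. g k + 1) = a + real (CARD('n) - 2)"
      by (simp add: sum.distrib t2 cd)
    also have "\<dots> = 0" using aa c2 by (simp add: of_nat_diff)
    finally have z: "(\<Sum>k\<in>UNIV - {i,j}. g k + 1) = 0" .
    have nn: "\<forall>k\<in>UNIV - {i,j}. 0 \<le> g k + 1"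
    proof
      fix k assume "k \<in> UNIV - {i,j}"
      hence "k \<noteq> i" "k \<noteq> j" by auto
      thus "0 \<le> g k + 1" unfolding g_def using s_pm[OF ij] s_pm[of i k] s_pm[of k j] by auto
    qed
    have "g k + 1 = 0" using z nn ki kj by (subst (asm) sum_nonneg_eq_0_iff) auto
    thus ?thesis unfolding g_def by (simp add: algebra_simps)
  qed
  have par: "E x y = (E x0 x = E x0 y)" if "x \<noteq> y" "x \<noteq> x0" "y \<noteq> x0" for x y x0
    using f[of x y x0] that by (auto simp: sdef symE_iff split: if_splits)
  obtain x0 :: 'n where True by blast
  define X where "X = insert x0 {y. E x0 y}"
  have mem: "z \<in> X \<longleftrightarrow> z = x0 \<or> E x0 z" for z unfolding X_def by auto
  have "switch E X x y" if xy: "x \<noteq> y" for x y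
  proof (cases "x = x0")
    case True
    thus ?thesis using xy mem[of y] mem[of x] irr unfolding switch_def by auto
  next
    case F1: False
    show ?thesis
    proof (cases "y = x0")
      case True
      thus ?thesis using xy mem[of y] mem[of x] irr symE_iff[of x x0] unfolding switch_def by auto
    next
      case False
      have p: "E x y = (E x0 x = E x0 y)" using par[OF xy F1 False] .
      show ?thesis unfolding switch_def mem using xy F1 False p by auto
    qed
  qed
  hence "complete_graph (switch E X)" unfolding complete_graph_def by blast
  thus ?thesis unfolding trivial_switching_class_def switching_class_def by blast
qed


lemma bip_compl: "bip E U \<Longrightarrow> bip E (-U)" unfolding bip_def by auto

lemma s_same: assumes "bip E U" "x \<noteq> y" "x \<in> U \<longleftrightarrow> y \<in> U" shows "s x y = 1"
  using assms unfolding bip_def by (auto simp: sdef)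

lemma sum_split: "(\<Sum>k\<in>UNIV. f k) = (\<Sum>k\<in>U. f k) + (\<Sum>k\<in>-U. f k)" for f :: "'n \<Rightarrow> real"
proof -
  have "(\<Sum>k\<in>U \<union> -U. f k) = (\<Sum>k\<in>U. f k) + (\<Sum>k\<in>-U. f k)"
    by (rule sum.union_disjoint) auto
  moreover have "U \<union> -U = UNIV" by auto
  ultimately show ?thesis by simp
qed

lemma E3:
  assumes b: "bip E U" and i: "i \<in> U" and j: "j \<notin> U"
  shows "(\<Sum>k\<in>-U. s i k) + (\<Sum>k\<in>U. s k j) = (a + 2) * s i j"
proof -
  have ij: "i \<noteq> j" using i j by auto
  have A: "s i k * s k j = s k j - (if k = i then s i j else 0)" if "k \<in> U" for k
    using s_same[OF b, of i k] i that by auto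
  have B: "s i k * s k j = s i k - (if k = j then s i j else 0)" if "k \<notin> U" for k
    using s_same[OF b, of k j] j that by auto
  have "(\<Sum>k\<in>U. s i k * s k j) = (\<Sum>k\<in>U. s k j - (if k = i then s i j else 0))"
    using A by (rule sum.cong[OF refl])
  also have "\<dots> = (\<Sum>k\<in>U. s k j) - s i j" using i by (simp add: sum_subtractf)
  finally have SU: "(\<Sum>k\<in>U. s i k * s k j) = (\<Sum>k\<in>U. s k j) - s i j" .
  have "(\<Sum>k\<in>-U. s i k * s k j) = (\<Sum>k\<in>-U. s i k - (if k = j then s i j else 0))"
    using B by (intro sum.cong) auto
  also have "\<dots> = (\<Sum>k\<in>-U. s i k) - s i j" using j by (simp add: sum_subtractf)
  finally have SW: "(\<Sum>k\<in>-U. s i k * s k j) = (\<Sum>k\<in>-U. s i k) - s i j" .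
  have "a * s i j = (\<Sum>k\<in>UNIV. s i k * s k j)" using H2[OF ij] by simp
  also have "\<dots> = (\<Sum>k\<in>U. s i k * s k j) + (\<Sum>k\<in>-U. s i k * s k j)" by (rule sum_split)
  finally show ?thesis using SU SW by (simp add: algebra_simps)
qed

lemma E1:
  assumes b: "bip E U" and i1: "i1 \<in> U" and i2: "i2 \<in> U" and ne: "i1 \<noteq> i2"
  shows "real (card U) - 2 + (\<Sum>k\<in>-U. s i1 k * s k i2) = a"
proof -
  have A: "s i1 k * s k i2 = 1 - (if k = i1 then 1 else 0) - (if k = i2 then 1 else 0)" if "k \<in> U" for k
    using s_same[OF b, of i1 k] s_same[OF b, of k i2] i1 i2 ne that by auto
  have "(\<Sum>k\<in>U. s i1 k * s k i2) = (\<Sum>k\<in>U. 1 - (if k = i1 then 1 else 0) - (if k = i2 then 1 else 0))"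
    using A by (rule sum.cong[OF refl])
  also have "\<dots> = real (card U) - 2" using i1 i2 by (simp add: sum_subtractf)
  finally have SU: "(\<Sum>k\<in>U. s i1 k * s k i2) = real (card U) - 2" .
  have s12: "s i1 i2 = 1" using s_same[OF b ne] i1 i2 by auto
  have "a = (\<Sum>k\<in>UNIV. s i1 k * s k i2)" using H2[OF ne] s12 by simp
  also have "\<dots> = (\<Sum>k\<in>U. s i1 k * s k i2) + (\<Sum>k\<in>-U. s i1 k * s k i2)" by (rule sum_split)
  finally show ?thesis using SU by simp
qed

lemma card_split: "card (U::'n set) + card (-U) = CARD('n)"
proof -
  have "card (U \<union> -U) = card U + card (-U)" by (rule card_Un_disjoint) (auto intro: finite_subset)
  moreover have "U \<union> -U = UNIV" by auto
  ultimately show ?thesis by simp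
qed

lemma rows:
  assumes b: "bip E U" and t: "a + 2 \<noteq> 0"
  shows "(\<forall>i\<in>U. \<forall>j j'. j \<notin> U \<longrightarrow> j' \<notin> U \<longrightarrow> s i j = s i j') \<or>
         (\<forall>j. j \<notin> U \<longrightarrow> (\<forall>i i'. i \<in> U \<longrightarrow> i' \<in> U \<longrightarrow> s i j = s i' j))"
proof (rule disjCI)
  assume "\<not> (\<forall>j. j \<notin> U \<longrightarrow> (\<forall>i i'. i \<in> U \<longrightarrow> i' \<in> U \<longrightarrow> s i j = s i' j))"
  then obtain j1 i1 i2 where j1: "j1 \<notin> U" and i1: "i1 \<in> U" and i2: "i2 \<in> U"
    and ne: "s i1 j1 \<noteq> s i2 j1" by blast
  have d: "s i1 j - s i2 j = s i1 j1 - s i2 j1" if j: "j \<notin> U" for j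
  proof -
    have "(a + 2) * (s i1 j - s i2 j) = (a + 2) * (s i1 j1 - s i2 j1)"
      using E3[OF b i1 j] E3[OF b i2 j] E3[OF b i1 j1] E3[OF b i2 j1] by (simp add: algebra_simps)
    thus ?thesis using t by simp
  qed
  have r1: "s i1 j = s i1 j1" if j: "j \<notin> U" for j
  proof -
    have a1: "i1 \<noteq> j" "i2 \<noteq> j" "i1 \<noteq> j1" "i2 \<noteq> j1" using i1 i2 j j1 by auto
    show ?thesis using d[OF j] ne s_pm[OF a1(1)] s_pm[OF a1(2)] s_pm[OF a1(3)] s_pm[OF a1(4)] by auto
  qed
  show "\<forall>i\<in>U. \<forall>j j'. j \<notin> U \<longrightarrow> j' \<notin> U \<longrightarrow> s i j = s i j'"
  proof (intro ballI allI impI)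
    fix i j j' assume i: "i \<in> U" and j: "j \<notin> U" and j': "j' \<notin> U"
    have "(a + 2) * (s i j - s i j') = (a + 2) * (s i1 j - s i1 j')"
      using E3[OF b i j] E3[OF b i j'] E3[OF b i1 j] E3[OF b i1 j'] by (simp add: algebra_simps)
    thus "s i j = s i j'" using t r1[OF j] r1[OF j'] by simp
  qed
qed

lemma rc:
  assumes b: "bip E U" and t: "a + 2 \<noteq> 0"
    and rw: "\<forall>i\<in>U. \<forall>j j'. j \<notin> U \<longrightarrow> j' \<notin> U \<longrightarrow> s i j = s i j'" and j0: "j0 \<notin> U"
  shows "(\<exists>c. \<forall>i\<in>U. \<forall>j. j \<notin> U \<longrightarrow> s i j = c) \<or> (CARD('n) = 3 \<and> a = -1)"
proof (cases "\<forall>i\<in>U. \<forall>i'\<in>U. s i j0 = s i' j0")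
  case True
  show ?thesis
  proof (cases "U = {}")
    case True thus ?thesis by auto
  next
    case False
    then obtain i0 where i0: "i0 \<in> U" by auto
    have "\<forall>i\<in>U. \<forall>j. j \<notin> U \<longrightarrow> s i j = s i0 j0"
    proof (intro ballI allI impI)
      fix i j assume i: "i \<in> U" and j: "j \<notin> U"
      have "s i j = s i j0" using rw i j j0 by blast
      also have "\<dots> = s i0 j0" using True i i0 by blast
      finally show "s i j = s i0 j0" .
    qed
    thus ?thesis by blast
  qed
next
  case False
  then obtain i1 i2 where i1: "i1 \<in> U" and i2: "i2 \<in> U" and ne: "s i1 j0 \<noteq> s i2 j0" by blast
  define m where "m = real (card U)"
  define n where "n = real (card (-U))"
  have rowsum: "(\<Sum>k\<in>-U. s i k) = n * s i j0" if i: "i \<in> U" for i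
  proof -
    have r: "s i k = s i j0" if "k \<in> -U" for k using rw i j0 that by blast
    have "(\<Sum>k\<in>-U. s i k) = (\<Sum>k\<in>-U. s i j0)" using r by (rule sum.cong[OF refl])
    thus ?thesis unfolding n_def by simp
  qed
  have pm1: "s i1 j0 = 1 \<or> s i1 j0 = -1" using s_pm[of i1 j0] i1 j0 by auto
  have pm2: "s i2 j0 = 1 \<or> s i2 j0 = -1" using s_pm[of i2 j0] i2 j0 by auto
  have x2: "s i2 j0 = - s i1 j0" using pm1 pm2 ne by auto
  have tn: "a + 2 = n"
  proof -
    have "(a + 2) * s i1 j0 - (a + 2) * s i2 j0 = n * s i1 j0 - n * s i2 j0"
      using E3[OF b i1 j0] E3[OF b i2 j0] rowsum[OF i1] rowsum[OF i2] by (simp add: algebra_simps)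
    hence "(a + 2 - n) * (2 * s i1 j0) = 0" using x2 by (simp add: algebra_simps)
    thus ?thesis using pm1 by auto
  qed
  have crossE1: "(\<Sum>k\<in>-U. s i k * s k i') = n * (s i j0 * s i' j0)" if "i \<in> U" "i' \<in> U" for i i'
  proof -
    have r: "s i k * s k i' = s i j0 * s i' j0" if "k \<in> -U" for k
    proof -
      have "s i k = s i j0" using rw \<open>i \<in> U\<close> j0 that by blast
      moreover have "s i' k = s i' j0" using rw \<open>i' \<in> U\<close> j0 that by blast
      moreover have "s k i' = s i' k" by (rule s_sym)
      ultimately show ?thesis by simp
    qed
    have "(\<Sum>k\<in>-U. s i k * s k i') = (\<Sum>k\<in>-U. s i j0 * s i' j0)"
      using r by (rule sum.cong[OF refl])
    thus ?thesis unfolding n_def by simp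
  qed
  have i12: "i1 \<noteq> i2" using ne by auto
  have "m - 2 + n * (s i1 j0 * s i2 j0) = a" using E1[OF b i1 i2 i12] crossE1[OF i1 i2] unfolding m_def by simp
  hence m2n: "m = 2 * n" using x2 pm1 tn by auto
  have mle: "card U \<le> 2"
  proof (rule ccontr)
    assume "\<not> card U \<le> 2"
    hence "card (U - {i1, i2}) > 0" using i1 i2 i12 by (simp add: card_Diff_subset)
    hence "U - {i1, i2} \<noteq> {}" by (auto simp: card_gt_0_iff)
    then obtain i3 where i3: "i3 \<in> U" "i3 \<noteq> i1" "i3 \<noteq> i2" by blast
    have pm3: "s i3 j0 = 1 \<or> s i3 j0 = -1" using s_pm[of i3 j0] i3 j0 by auto
    have "m - 2 + n = a"
    proof (cases "s i3 j0 = s i1 j0")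
      case True
      have "m - 2 + n * (s i1 j0 * s i3 j0) = a" using E1[OF b i1 i3(1)] i3 crossE1[OF i1 i3(1)] unfolding m_def by simp
      thus ?thesis using True pm1 by auto
    next
      case False
      hence "s i3 j0 = s i2 j0" using pm1 pm2 pm3 ne by auto
      have "m - 2 + n * (s i2 j0 * s i3 j0) = a" using E1[OF b i2 i3(1)] i3 crossE1[OF i2 i3(1)] unfolding m_def by simp
      thus ?thesis using \<open>s i3 j0 = s i2 j0\<close> pm2 by auto
    qed
    hence "m = 0" using tn by simp
    thus False using i1 unfolding m_def by auto
  qed
  have "-U \<noteq> {}" using j0 by auto
  hence n1: "card (-U) \<ge> 1" by (simp add: Suc_le_eq card_gt_0_iff)
  have "card U = 2 \<and> card (-U) = 1" using m2n mle n1 unfolding m_def n_def by linarith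
  thus ?thesis using card_split[of U] tn unfolding n_def by auto
qed

lemma t0:
  assumes b: "bip E U" and t: "a = -2" and U: "i0 \<in> U" and W: "j0 \<notin> U"
  shows "real (card (-U)) = real (card U) * (real (card U) - 1)"
proof -
  define m where "m = real (card U)"
  define n where "n = real (card (-U))"
  define R where "R i = (\<Sum>k\<in>-U. s i k)" for i
  define C where "C j = (\<Sum>k\<in>U. s k j)" for j
  have e3: "R i + C j = 0" if "i \<in> U" "j \<notin> U" for i j
    using E3[OF b that] t unfolding R_def C_def by simp
  have "(\<Sum>i\<in>U. R i) = (\<Sum>j\<in>-U. C j)" unfolding R_def C_def by (rule sum.swap)
  moreover have "(\<Sum>i\<in>U. R i) = (\<Sum>i\<in>U. - C j0)" using e3 W by (intro sum.cong) (auto simp: add_eq_0_iff)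
  moreover have "(\<Sum>j\<in>-U. C j) = (\<Sum>j\<in>-U. - R i0)" using e3 U by (intro sum.cong) (auto simp: add_eq_0_iff)
  ultimately have "m * (- C j0) = n * (- R i0)" unfolding m_def n_def by simp
  hence "(m + n) * C j0 = 0" using e3[OF U W] by (simp add: algebra_simps add_eq_0_iff)
  moreover have "m > 0" unfolding m_def using U by (auto simp: card_gt_0_iff)
  moreover have "n \<ge> 0" unfolding n_def by simp
  ultimately have C0: "C j0 = 0" by simp
  have Cz: "C j = 0" if "j \<notin> U" for j using e3[OF U that] e3[OF U W] C0 by simp
  have each: "(\<Sum>k\<in>-U. s i0 k * s k i') = - m" if "i' \<in> U - {i0}" for i'
    using E1[OF b U, of i'] that t unfolding m_def by auto
  have "(\<Sum>i'\<in>U - {i0}. \<Sum>k\<in>-U. s i0 k * s k i') = (\<Sum>i'\<in>U - {i0}. - m)"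
    using each by (rule sum.cong[OF refl])
  also have "\<dots> = - m * (m - 1)"
  proof -
    have "card U \<ge> 1" using U by (metis One_nat_def Suc_leI card_gt_0_iff finite empty_iff)
    thus ?thesis using U unfolding m_def by (simp add: of_nat_diff)
  qed
  finally have L: "(\<Sum>i'\<in>U - {i0}. \<Sum>k\<in>-U. s i0 k * s k i') = - m * (m - 1)" .
  have "(\<Sum>i'\<in>U - {i0}. \<Sum>k\<in>-U. s i0 k * s k i') = (\<Sum>k\<in>-U. \<Sum>i'\<in>U - {i0}. s i0 k * s k i')"
    by (rule sum.swap)
  also have "\<dots> = (\<Sum>k\<in>-U. s i0 k * (\<Sum>i'\<in>U - {i0}. s i' k))"
  proof (intro sum.cong refl)
    fix k
    have "(\<Sum>i'\<in>U - {i0}. s i0 k * s k i') = (\<Sum>i'\<in>U - {i0}. s i0 k * s i' k)"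
      by (rule sum.cong[OF refl]) (metis s_sym)
    thus "(\<Sum>i'\<in>U - {i0}. s i0 k * s k i') = s i0 k * (\<Sum>i'\<in>U - {i0}. s i' k)"
      by (simp add: sum_distrib_left)
  qed
  also have "\<dots> = (\<Sum>k\<in>-U. -1)"
  proof (intro sum.cong refl)
    fix k assume k: "k \<in> -U"
    have "(\<Sum>i'\<in>U. s i' k) = s i0 k + (\<Sum>i'\<in>U - {i0}. s i' k)" using U by (simp add: sum.remove)
    hence "(\<Sum>i'\<in>U - {i0}. s i' k) = - s i0 k" using Cz[of k] k unfolding C_def by simp
    moreover have "s i0 k = 1 \<or> s i0 k = -1" using s_pm[of i0 k] k U by auto
    ultimately show "s i0 k * (\<Sum>i'\<in>U - {i0}. s i' k) = -1" by auto
  qed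
  also have "\<dots> = - n" unfolding n_def by simp
  finally have "- n = - m * (m - 1)" using L by simp
  thus ?thesis unfolding m_def n_def by simp
qed


lemma triv_const:
  assumes b: "bip E U" and c: "\<forall>i\<in>U. \<forall>j. j \<notin> U \<longrightarrow> s i j = c"
  shows "trivial_switching_class E"
proof (cases "\<exists>i\<in>U. \<exists>j. j \<notin> U \<and> \<not> E i j")
  case True
  then obtain i j where ij: "i \<in> U" "j \<notin> U" "\<not> E i j" by blast
  have "s i j = 1" using ij by (auto simp: sdef)
  hence c1: "c = 1" using c ij by auto
  have "\<not> E x y" for x y
  proof
    assume e: "E x y"
    hence "x \<in> U \<longleftrightarrow> y \<notin> U" using b unfolding bip_def by blast
    moreover have "x \<noteq> y" using e irr by auto
    ultimately show False
    proof (cases "x \<in> U")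
      case True
      hence "s x y = 1" using c c1 \<open>x \<in> U \<longleftrightarrow> y \<notin> U\<close> by auto
      thus False using e \<open>x \<noteq> y\<close> by (simp add: sdef)
    next
      case False
      hence "s y x = 1" using c c1 \<open>x \<in> U \<longleftrightarrow> y \<notin> U\<close> by auto
      thus False using symE[OF e] \<open>x \<noteq> y\<close> by (simp add: sdef)
    qed
  qed
  thus ?thesis by (rule triv_edgeless)
next
  case False
  hence cross: "E i j" if "i \<in> U" "j \<notin> U" for i j using that by blast
  have "\<not> switch E U x y" for x y
  proof
    assume sw: "switch E U x y"
    have bb: "E x y \<Longrightarrow> (x \<in> U \<longleftrightarrow> y \<notin> U)" using b unfolding bip_def by blast
    show False
    proof (cases "x \<in> U")
      case True
      thus False using sw bb cross[of x y] unfolding switch_def by auto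
    next
      case False
      thus False using sw bb cross[of y x] symE[of y x] unfolding switch_def by auto
    qed
  qed
  hence "edgeless_graph (switch E U)" unfolding edgeless_graph_def by blast
  thus ?thesis unfolding trivial_switching_class_def switching_class_def by blast
qed

lemma main_rtg:
  assumes b: "bip E U" and nt: "\<not> trivial_switching_class E"
  shows False
proof -
  have ex: "\<exists>i0 j0. i0 \<in> U \<and> j0 \<notin> U"
  proof (rule ccontr)
    assume "\<not> ?thesis"
    hence "\<not> E x y" for x y using b unfolding bip_def by blast
    thus False using triv_edgeless nt by blast
  qed
  then obtain i0 j0 where i0: "i0 \<in> U" and j0: "j0 \<notin> U" by blast
  have bc: "bip E (-U)" using bip_compl[OF b] .
  show False
  proof (cases "a = -2")
    case True
    have e1: "real (card (-U)) = real (card U) * (real (card U) - 1)" using t0[OF b True i0 j0] .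
    have e2: "real (card U) = real (card (-U)) * (real (card (-U)) - 1)"
      using t0[OF bc True, of j0 i0] i0 j0 by simp
    define M where "M = real (card U)"
    define N where "N = real (card (-U))"
    have M1: "M \<ge> 1" unfolding M_def using i0 by (simp add: Suc_le_eq card_gt_0_iff) blast
    have N1: "N \<ge> 1" unfolding N_def using j0 by (simp add: Suc_le_eq card_gt_0_iff) blast
    have e1': "N = M * (M - 1)" and e2': "M = N * (N - 1)" using e1 e2 unfolding M_def N_def by auto
    have M2: "M \<ge> 2"
    proof -
      have "card U \<noteq> 1"
      proof
        assume "card U = 1"
        hence "M = 1" unfolding M_def by simp
        thus False using e1' N1 by simp
      qed
      moreover have "card U \<ge> 1" using M1 unfolding M_def by simp
      ultimately have "card U \<ge> 2" by simp
      thus ?thesis unfolding M_def by simp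
    qed
    have N2: "N \<ge> 2"
    proof -
      have "card (-U) \<noteq> 1"
      proof
        assume "card (-U) = 1"
        hence "N = 1" unfolding N_def by simp
        thus False using e2' M1 by simp
      qed
      moreover have "card (-U) \<ge> 1" using N1 unfolding N_def by simp
      ultimately have "card (-U) \<ge> 2" by simp
      thus ?thesis unfolding N_def by simp
    qed
    have "M * 1 \<le> M * (M - 1)" using M2 by (intro mult_left_mono) auto
    hence NM: "N \<ge> M" using e1' by simp
    have "N * 1 \<le> N * (N - 1)" using N2 by (intro mult_left_mono) auto
    hence MN: "M \<ge> N" using e2' by simp
    have "M = N" using NM MN by simp
    hence "M * (M - 1) = M * 1" using e1' by simp
    hence "M = 2" using M2 by simp
    hence "N = 2" using \<open>M = N\<close> by simp
    have "CARD('n) = card U + card (-U)" using card_split[of U] by simp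
    hence "real CARD('n) = M + N" unfolding M_def N_def by simp
    hence "a = - (real CARD('n) - 2)" using True \<open>M = 2\<close> \<open>N = 2\<close> by simp
    thus False using triv_neg nt by blast
  next
    case False
    hence t: "a + 2 \<noteq> 0" by simp
    have fin: "(\<exists>c. \<forall>i\<in>U. \<forall>j. j \<notin> U \<longrightarrow> s i j = c) \<or> (CARD('n) = 3 \<and> a = -1)"
    proof (cases "\<forall>i\<in>U. \<forall>j j'. j \<notin> U \<longrightarrow> j' \<notin> U \<longrightarrow> s i j = s i j'")
      case True
      show ?thesis by (rule rc[OF b t True j0])
    next
      case False
      hence col: "\<forall>j. j \<notin> U \<longrightarrow> (\<forall>i i'. i \<in> U \<longrightarrow> i' \<in> U \<longrightarrow> s i j = s i' j)"
        using rows[OF b t] by blast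
      have rw: "\<forall>i\<in>-U. \<forall>j j'. j \<notin> -U \<longrightarrow> j' \<notin> -U \<longrightarrow> s i j = s i j'"
      proof (intro ballI allI impI)
        fix i j j' assume i: "i \<in> -U" and j: "j \<notin> -U" and j': "j' \<notin> -U"
        have ij: "i \<notin> U" "j \<in> U" "j' \<in> U" using i j j' by auto
        have "s j i = s j' i" using col ij by blast
        have "s i j = s j i" by (rule s_sym)
        also have "\<dots> = s j' i" by fact
        also have "\<dots> = s i j'" by (rule s_sym)
        finally show "s i j = s i j'" .
      qed
      have "(\<exists>c. \<forall>i\<in>-U. \<forall>j. j \<notin> -U \<longrightarrow> s i j = c) \<or> (CARD('n) = 3 \<and> a = -1)"
        using rc[OF bc t rw, of i0] i0 by simp
      thus ?thesis
      proof
        assume "\<exists>c. \<forall>i\<in>-U. \<forall>j. j \<notin> -U \<longrightarrow> s i j = c"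
        then obtain c where c: "\<forall>i\<in>-U. \<forall>j. j \<notin> -U \<longrightarrow> s i j = c" by blast
        have "\<forall>i\<in>U. \<forall>j. j \<notin> U \<longrightarrow> s i j = c"
        proof (intro ballI allI impI)
          fix i j assume "i \<in> U" "j \<notin> U"
          hence "j \<in> -U" "i \<notin> -U" by auto
          hence "s j i = c" using c by blast
          moreover have "s i j = s j i" by (rule s_sym)
          ultimately show "s i j = c" by simp
        qed
        thus ?thesis by blast
      qed simp
    qed
    thus False
    proof
      assume "\<exists>c. \<forall>i\<in>U. \<forall>j. j \<notin> U \<longrightarrow> s i j = c"
      thus False using triv_const[OF b] nt by blast
    next
      assume "CARD('n) = 3 \<and> a = -1"
      hence "a = - (real CARD('n) - 2)" by simp
      thus False using triv_neg nt by blast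
    qed
  qed
qed

end


lemma seidel_entry:
  assumes "simple_graph E"
  shows "seidel_matrix E $ i $ j = (if i = j then 0 else if E i j then -1 else 1)"
  using assms unfolding simple_graph_def
  by (auto simp: seidel_matrix_def all_ones_def adjacency_matrix_def mat_def)

theorem proposition7:
  fixes E :: "'n::finite \<Rightarrow> 'n \<Rightarrow> bool"
  assumes "simple_graph E"
    and "regular_two_graph E"
    and "\<not> trivial_switching_class E"
  shows "\<not> bipartite E"
proof
  assume "bipartite E"
  then obtain U where bU: "\<forall>x y. E x y \<longrightarrow> (x \<in> U \<longleftrightarrow> y \<notin> U)" unfolding bipartite_def by blast
  define S where "S = seidel_matrix E"
  define s where "s i j = S $ i $ j" for i j
  have sdef: "s i j = (if i = j then 0 else if E i j then -1 else 1)" for i j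
    unfolding s_def S_def by (rule seidel_entry[OF assms(1)])
  have symE: "E x y \<Longrightarrow> E y x" and irr: "\<not> E x x" for x y
    using assms(1) unfolding simple_graph_def by auto
  have Ssym: "transpose S = S"
    unfolding transpose_def vec_eq_iff
    using sdef symE by (auto simp: s_def)
  obtain a b where id: "\<And>x. S *v (S *v x) = a *\<^sub>R (S *v x) + b *\<^sub>R x"
    using two_eig_identity[OF Ssym] assms(2) unfolding regular_two_graph_def S_def by blast
  have col: "(S *v axis j 1) $ k = s k j" for j k
    by (simp add: matrix_vector_mult_def axis_def s_def if_distrib cong: if_cong)
  have H2: "(\<Sum>k\<in>UNIV. s i k * s k j) = a * s i j" if ij: "i \<noteq> j" for i j
  proof -
    have "(S *v (S *v axis j 1)) $ i = (\<Sum>k\<in>UNIV. s i k * s k j)"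
      by (simp add: matrix_vector_mult_def[of S "S *v axis j 1"] col s_def)
    moreover have "(a *\<^sub>R (S *v axis j 1) + b *\<^sub>R axis j 1) $ i = a * s i j"
    proof -
      have "axis j (1::real) $ i = 0" using ij by (simp add: axis_def)
      thus ?thesis by (simp add: col)
    qed
    ultimately show ?thesis using id[of "axis j 1"] by simp
  qed
  interpret rtg E s a
    by unfold_locales (use symE irr sdef H2 in auto)
  have "bip E U" unfolding bip_def using bU .
  thus False using main_rtg assms(3) by blast
qed


end
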